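(* Let $\mathbf G=(G,\le,\cdot,/,0,1)$ be a left-residuated po-groupoid with commutative multiplication whose underlying poset is a lattice. Then: (i) if $\mathbf G$ satisfies the contraposition law $x/y=\neg y/\neg x$, it satisfies $\neg\neg x=x$; (ii) if $\mathbf G$ satisfies the skew divisibility law $(\neg y/\neg x)\cdot y=x\wedge y$, it satisfies $\neg\neg x=x$; (iii) $\mathbf G$ satisfies the skew divisibility law $(\neg y/\neg x)\cdot y=x\wedge y$ (for all $x,y$) if and only if it satisfies both the divisibility law $(x/y)\cdot y=x\wedge y$ and the contraposition law $x/y=\neg y/\neg x$ (for all $x,y$).
   Context: A (bounded integral) left-residuated po-groupoid is a structure $\mathbf G=(G,\le,\cdot,/,0,1)$ where $(G,\le,0,1)$ is a bounded poset with least element $0$ and greatest element $1$, $\cdot$ is a binary operation on $G$ with $1\cdot x=x\cdot 1=x$ for all $x$, and $/$ is a binary operation on $G$ satisfying the left residuation law: for all $x,y,z\in G$, $x\cdot y\le z\iff x\le z/y$. The negation is $\neg x:=0/x$; $\wedge$ denotes the lattice meet. *)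

theory Defs
  imports Main
begin

text \<open>A bounded integral left-residuated po-groupoid whose underlying poset is a
lattice: the carrier is a type of class bounded_lattice (0 = bot, 1 = top),
with multiplication m and left division r (r z y stands for z / y).\<close>

definition left_res_groupoid :: "('a::bounded_lattice \<Rightarrow> 'a \<Rightarrow> 'a) \<Rightarrow> ('a \<Rightarrow> 'a \<Rightarrow> 'a) \<Rightarrow> bool" where
  "left_res_groupoid m r \<longleftrightarrow>
     (\<forall>x. m top x = x \<and> m x top = x) \<and>
     (\<forall>x y z. m x y \<le> z \<longleftrightarrow> x \<le> r z y)"

definition neg :: "('a::bounded_lattice \<Rightarrow> 'a \<Rightarrow> 'a) \<Rightarrow> 'a \<Rightarrow> 'a" where
  "neg r x = r bot x"

end

theory Submission
  imports Defs
begin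

theorem mainTheorem11:
  fixes m r :: "'a::bounded_lattice \<Rightarrow> 'a \<Rightarrow> 'a"
  assumes G: "left_res_groupoid m r"
    and comm: "\<And>x y. m x y = m y x"
  shows "((\<forall>x y. r x y = r (neg r y) (neg r x)) \<longrightarrow> (\<forall>x. neg r (neg r x) = x))
       \<and> ((\<forall>x y. m (r (neg r y) (neg r x)) y = inf x y) \<longrightarrow> (\<forall>x. neg r (neg r x) = x))
       \<and> ((\<forall>x y. m (r (neg r y) (neg r x)) y = inf x y) \<longleftrightarrow>
            ((\<forall>x y. m (r x y) y = inf x y) \<and> (\<forall>x y. r x y = r (neg r y) (neg r x))))"
proof -
  have unit: "\<And>x. m top x = x \<and> m x top = x" and res: "\<And>x y z. m x y \<le> z \<longleftrightarrow> x \<le> r z y"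
    using G unfolding left_res_groupoid_def by auto
  have r1: "\<And>x. r x top = x"
  proof -
    fix x
    have "\<And>z. z \<le> r x top \<longleftrightarrow> z \<le> x" using res unit by metis
    then show "r x top = x" by (meson order.antisym order.refl)
  qed
  have n1: "neg r top = bot" unfolding neg_def using r1 by simp
  have P1: "(\<forall>x y. r x y = r (neg r y) (neg r x)) \<longrightarrow> (\<forall>x. neg r (neg r x) = x)"
  proof (intro impI allI)
    fix x assume H: "\<forall>x y. r x y = r (neg r y) (neg r x)"
    have "x = r (neg r top) (neg r x)" using H r1 by metis
    then show "neg r (neg r x) = x" using n1 by (simp add: neg_def)
  qed
  have P2: "(\<forall>x y. m (r (neg r y) (neg r x)) y = inf x y) \<longrightarrow> (\<forall>x. neg r (neg r x) = x)"
  proof (intro impI allI)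
    fix x assume H: "\<forall>x y. m (r (neg r y) (neg r x)) y = inf x y"
    have "m (r (neg r top) (neg r x)) top = inf x top" using H by blast
    then show "neg r (neg r x) = x" using n1 unit by (simp add: neg_def)
  qed
  have P3: "(\<forall>x y. m (r (neg r y) (neg r x)) y = inf x y) \<Longrightarrow>
            ((\<forall>x y. m (r x y) y = inf x y) \<and> (\<forall>x y. r x y = r (neg r y) (neg r x)))"
  proof -
    assume H: "\<forall>x y. m (r (neg r y) (neg r x)) y = inf x y"
    have nn: "\<And>x. neg r (neg r x) = x" using P2 H by blast
    have le: "\<And>a b. r (neg r b) (neg r a) \<le> r a b"
    proof -
      fix a b
      have "m (r (neg r b) (neg r a)) b \<le> a" using H by simp
      then show "r (neg r b) (neg r a) \<le> r a b" using res by blast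
    qed
    have C: "\<forall>x y. r x y = r (neg r y) (neg r x)"
    proof (intro allI)
      fix x y
      have "r (neg r (neg r x)) (neg r (neg r y)) \<le> r (neg r y) (neg r x)" by (rule le)
      then have "r x y \<le> r (neg r y) (neg r x)" using nn by simp
      then show "r x y = r (neg r y) (neg r x)" using le by (meson order.antisym)
    qed
    have "\<forall>x y. m (r x y) y = inf x y" using C H by metis
    then show ?thesis using C by blast
  qed
  have P4: "((\<forall>x y. m (r x y) y = inf x y) \<and> (\<forall>x y. r x y = r (neg r y) (neg r x))) \<Longrightarrow>
            (\<forall>x y. m (r (neg r y) (neg r x)) y = inf x y)"
    by metis
  show ?thesis using P1 P2 P3 P4 by blast
qed

end
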